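(* For every max-min (unbounded space) algorithm $ALG$ for the classic bin packing problem and every positive integer $m$, there exists a sorted item sequence $I$ such that $OPT(I)>m$ and $ALG(I)>\frac{16}{15}\cdot(OPT(I)-1)$.
   Context: Classic bin packing: an item sequence $I=(a_1,\dots,a_n)\in(0,1]^n$ must be packed into bins of capacity $1$; $OPT(I)$ is the minimum number of non-empty bins, $ALG(I)$ the number of non-empty bins used by $ALG$. $I$ is sorted if $a_1\ge\cdots\ge a_n$. A max-min algorithm first sorts the input in non-increasing order and then repeatedly takes either the head (largest) or the tail (smallest) item of the currently remaining sorted sequence and packs it into some bin (any bin it can fit into, there being no limit on the number of open bins), each decision depending only on the items already packed and the current head and tail items, without seeing any other remaining items (in particular, not how many items remain). *)

theory Defs
  imports Complex_Main
begin

definition valid_packing :: "real list \<Rightarrow> (nat \<Rightarrow> nat) \<Rightarrow> bool" where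
  "valid_packing I f \<longleftrightarrow>
     (\<forall>b. (\<Sum>i | i < length I \<and> f i = b. I ! i) \<le> 1)"

definition bins_used :: "real list \<Rightarrow> (nat \<Rightarrow> nat) \<Rightarrow> nat" where
  "bins_used I f = card (f ` {..<length I})"

definition OPT :: "real list \<Rightarrow> nat" where
  "OPT I = (LEAST k. \<exists>f. valid_packing I f \<and> bins_used I f = k)"

text \<open>A history is the list of already packed items in packing order, each given as
  (size, index of the bin it was packed into). Bins are numbered 0,1,2,... in order of opening.\<close>
type_synonym history = "(real \<times> nat) list"

definition nbins :: "history \<Rightarrow> nat" where
  "nbins h = card (snd ` set h)"

definition load :: "history \<Rightarrow> nat \<Rightarrow> real" where
  "load h j = sum_list (map fst (filter (\<lambda>p. snd p = j) h))"

text \<open>A max-min algorithm is a function that, given the history and the current head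
  (largest remaining) and tail (smallest remaining) item sizes, returns
  (True = take head / False = take tail, target bin index). If the target index is an
  existing bin in which the item fits, the item goes there; otherwise a new bin is opened.
  (Every function yields a valid algorithm, and every valid max-min algorithm is such a function.)\<close>
type_synonym maxmin_alg = "history \<Rightarrow> real \<Rightarrow> real \<Rightarrow> bool \<times> nat"

function run :: "maxmin_alg \<Rightarrow> history \<Rightarrow> real list \<Rightarrow> history" where
  "run A h [] = h"
| "run A h (x # xs) =
     (let (takehead, j) = A h x (last (x # xs));
          y = (if takehead then x else last (x # xs));
          rest = (if takehead then xs else butlast (x # xs));
          b = (if j < nbins h \<and> load h j + y \<le> 1 then j else nbins h)
      in run A (h @ [(y, b)]) rest)"
  by pat_completeness auto
termination
  by (relation "measure (\<lambda>(A, h, xs). length xs)") (auto simp: Let_def split: if_splits prod.splits)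

definition ALG :: "maxmin_alg \<Rightarrow> real list \<Rightarrow> nat" where
  "ALG A I = nbins (run A [] I)"

end

theory Submission
  imports Defs "HOL-Combinatorics.Permutations"
begin


definition place :: "history \<Rightarrow> nat \<Rightarrow> real \<Rightarrow> history" where
  "place h j y = h @ [(y, if j < nbins h \<and> load h j + y \<le> 1 then j else nbins h)]"

lemma run_step:
  assumes "L \<noteq> []"
  shows "run A h L = (case A h (hd L) (last L) of (th, j) \<Rightarrow>
           run A (place h j (if th then hd L else last L)) (if th then tl L else butlast L))"
  using assms by (cases L) (auto simp: place_def Let_def split: prod.split)

definition binv :: "history \<Rightarrow> bool" where
  "binv h \<longleftrightarrow> snd ` set h = {..<nbins h} \<and> (\<forall>j. load h j \<le> 1)"

lemma inv_Nil: "binv []"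
  by (simp add: binv_def nbins_def load_def)

lemma load_snoc: "load (h @ [(y, c)]) j = load h j + (if c = j then y else 0)"
  by (simp add: load_def)

lemma load_notin: "j \<notin> snd ` set h \<Longrightarrow> load h j = 0"
proof -
  assume "j \<notin> snd ` set h"
  then have "filter (\<lambda>p. snd p = j) h = []" by (auto simp: filter_empty_conv)
  then show ?thesis by (simp add: load_def)
qed

lemma inv_place:
  assumes "binv h" "y \<le> 1"
  shows "binv (place h j y)"
proof (cases "j < nbins h \<and> load h j + y \<le> 1")
  case True
  then have p: "place h j y = h @ [(y, j)]" by (simp add: place_def)
  have s0: "snd ` set h = {..<nbins h}" using assms(1) by (simp add: binv_def)
  have "snd ` set (h @ [(y, j)]) = snd ` set h \<union> {j}" by auto
  then have s: "snd ` set (h @ [(y, j)]) = {..<nbins h}" using s0 True by auto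
  then have "nbins (h @ [(y, j)]) = nbins h" by (simp add: nbins_def)
  with s have "snd ` set (h @ [(y, j)]) = {..<nbins (h @ [(y, j)])}" by simp
  moreover have "\<forall>j'. load (h @ [(y, j)]) j' \<le> 1"
    using assms(1) True by (auto simp: load_snoc binv_def)
  ultimately show ?thesis by (simp add: p binv_def)
next
  case False
  then have p: "place h j y = h @ [(y, nbins h)]" by (auto simp: place_def)
  have s0: "snd ` set h = {..<nbins h}" using assms(1) by (simp add: binv_def)
  have "snd ` set (h @ [(y, nbins h)]) = snd ` set h \<union> {nbins h}" by auto
  then have s: "snd ` set (h @ [(y, nbins h)]) = {..<Suc (nbins h)}" using s0
    by (auto simp: lessThan_Suc)
  then have "nbins (h @ [(y, nbins h)]) = Suc (nbins h)" by (simp add: nbins_def)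
  with s have "snd ` set (h @ [(y, nbins h)]) = {..<nbins (h @ [(y, nbins h)])}" by simp
  moreover have "load h (nbins h) = 0"
    using assms(1) by (intro load_notin) (auto simp: binv_def)
  then have "\<forall>j'. load (h @ [(y, nbins h)]) j' \<le> 1"
    using assms by (auto simp: load_snoc binv_def)
  ultimately show ?thesis by (simp add: p binv_def)
qed

lemma run_props:
  "binv h \<Longrightarrow> (\<forall>x\<in>set L. x \<le> 1) \<Longrightarrow>
   (\<exists>T. run A h L = h @ T) \<and> binv (run A h L) \<and>
   mset (map fst (run A h L)) = mset (map fst h) + mset L"
proof (induction "length L" arbitrary: h L rule: less_induct)
  case less
  show ?case
  proof (cases "L = []")
    case True
    then show ?thesis using less.prems by simp
  next
    case False
    obtain th j where A: "A h (hd L) (last L) = (th, j)" by fastforce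
    define y where "y = (if th then hd L else last L)"
    define R where "R = (if th then tl L else butlast L)"
    have r: "run A h L = run A (place h j y) R"
      using run_step[OF False, of A h] A by (simp add: y_def R_def)
    have yin: "y \<in> set L" using False by (auto simp: y_def)
    have ms: "mset L = add_mset y (mset R)"
    proof (cases th)
      case True
      then show ?thesis using False by (simp add: y_def R_def) (metis list.collapse mset.simps(2))
    next
      case f: False
      have "L = butlast L @ [last L]" using False by simp
      then have "mset L = mset (butlast L @ [last L])" by simp
      then show ?thesis using f by (simp add: y_def R_def)
    qed
    have len: "length R < length L" using False by (auto simp: R_def)
    have Rs: "\<forall>x\<in>set R. x \<le> 1" using less.prems(2) ms
      by (metis in_multiset_in_set union_iff mset_add add_mset_add_single set_mset_mset)
    have ip: "binv (place h j y)" using inv_place less.prems yin by blast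
    from less.hyps[OF len ip Rs] obtain T where
      T: "run A (place h j y) R = place h j y @ T" and
      i2: "binv (run A (place h j y) R)" and
      m2: "mset (map fst (run A (place h j y) R)) = mset (map fst (place h j y)) + mset R"
      by blast
    obtain c where pc: "place h j y = h @ [(y, c)]" by (simp add: place_def)
    show ?thesis
      using T i2 m2 r pc ms by auto
  qed
qed



definition cnt :: "history \<Rightarrow> real \<Rightarrow> nat \<Rightarrow> nat" where
  "cnt H x j = length (filter (\<lambda>p. p = (x, j)) H)"

definition tot :: "history \<Rightarrow> real \<Rightarrow> nat" where
  "tot H x = length (filter (\<lambda>p. fst p = x) H)"

lemma sum_cnt: "snd ` set H \<subseteq> {..<n} \<Longrightarrow> (\<Sum>j<n. cnt H x j) = tot H x"
proof (induction H)
  case Nil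
  then show ?case by (simp add: cnt_def tot_def)
next
  case (Cons p H)
  obtain y c where p: "p = (y, c)" by fastforce
  have c: "c < n" using Cons.prems p by auto
  have "(\<Sum>j<n. cnt (p # H) x j) = (\<Sum>j<n. (if j = c \<and> y = x then 1 else 0) + cnt H x j)"
    by (rule sum.cong) (auto simp: cnt_def p)
  also have "\<dots> = (\<Sum>j<n. (if j = c \<and> y = x then 1 else 0)) + (\<Sum>j<n. cnt H x j)"
    by (simp add: sum.distrib)
  also have "(\<Sum>j<n. (if j = c \<and> y = x then 1 else (0::nat))) = (if y = x then 1 else 0)"
    using c by (simp add: sum.If_cases)
  finally show ?case using Cons by (auto simp: tot_def p)
qed

lemma tot_mset: "tot H x = count (mset (map fst H)) x"
  by (induction H) (auto simp: tot_def)

lemma load_cnt: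
  "set (map fst H) \<subseteq> {2/5, 3/20, 7/20} \<Longrightarrow>
   load H j = 2/5 * cnt H (2/5) j + 3/20 * cnt H (3/20) j + 7/20 * cnt H (7/20) j"
proof (induction H)
  case Nil
  then show ?case by (simp add: load_def cnt_def)
next
  case (Cons p H)
  obtain y c where p: "p = (y, c)" by fastforce
  have l: "load (p # H) j = (if c = j then y else 0) + load H j" by (simp add: load_def p)
  have y: "y = 2/5 \<or> y = 3/20 \<or> y = 7/20" using Cons.prems p by auto
  have IH: "load H j = 2/5 * cnt H (2/5) j + 3/20 * cnt H (3/20) j + 7/20 * cnt H (7/20) j"
    using Cons by auto
  show ?case using y IH l by (auto simp: cnt_def p algebra_simps)
qed

lemma feas:
  assumes "binv H" "set (map fst H) \<subseteq> {2/5, 3/20, 7/20}"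
  shows "8 * cnt H (2/5) j + 3 * cnt H (3/20) j + 7 * cnt H (7/20) j \<le> 20"
proof -
  have "load H j \<le> 1" using assms(1) by (simp add: binv_def)
  then have "2/5 * cnt H (2/5) j + 3/20 * cnt H (3/20) j + 7/20 * cnt H (7/20) j \<le> (1::real)"
    using load_cnt[OF assms(2)] by simp
  then have "real (8 * cnt H (2/5) j + 3 * cnt H (3/20) j + 7 * cnt H (7/20) j) \<le> 20"
    by simp
  then show ?thesis by linarith
qed

lemma cnt_mono: "cnt H0 x j \<le> cnt (H0 @ T) x j"
  by (simp add: cnt_def)

lemma cnt_zero: "binv H0 \<Longrightarrow> nbins H0 \<le> j \<Longrightarrow> cnt H0 x j = 0"
proof -
  assume a: "binv H0" "nbins H0 \<le> j"
  have "(x, j) \<notin> set H0"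
  proof
    assume "(x, j) \<in> set H0"
    then have "j \<in> snd ` set H0" by force
    then show False using a by (auto simp: binv_def)
  qed
  then show ?thesis by (auto simp: cnt_def filter_empty_conv)
qed

lemma nbins_mono: "nbins H0 \<le> nbins (H0 @ T)"
  unfolding nbins_def by (rule card_mono) auto

lemma sum_prefix:
  assumes "binv H0" "nbins H0 \<le> N" "g 0 0 = (0::nat)"
  shows "(\<Sum>j<N. g (cnt H0 x j) (cnt H0 y j)) = (\<Sum>j<nbins H0. g (cnt H0 x j) (cnt H0 y j))"
proof (rule sum.mono_neutral_right)
  show "\<forall>i\<in>{..<N} - {..<nbins H0}. g (cnt H0 x i) (cnt H0 y i) = 0"
    using assms cnt_zero by auto
qed (use assms in auto)

lemma sum_le_card: "(\<And>j. j < N \<Longrightarrow> f j \<le> (c::nat)) \<Longrightarrow> (\<Sum>j<N. f j) \<le> N * c"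
proof -
  assume "\<And>j. j < N \<Longrightarrow> f j \<le> c"
  then have "(\<Sum>j<N. f j) \<le> (\<Sum>j<N. c)" by (intro sum_mono) auto
  then show ?thesis by simp
qed

fun sim :: "maxmin_alg \<Rightarrow> nat \<Rightarrow> history" where
  "sim A 0 = []"
| "sim A (Suc t) = (case A (sim A t) (2/5) (3/20) of (th, j) \<Rightarrow>
     place (sim A t) j (if th then 2/5 else 3/20))"

definition hc where "hc A t = tot (sim A t) (2/5)"
definition sc where "sc A t = tot (sim A t) (3/20)"

lemma sim_binv: "binv (sim A t)"
  by (induction t) (auto simp: inv_Nil split: prod.split intro!: inv_place)

lemma sim_items: "set (map fst (sim A t)) \<subseteq> {2/5, 3/20}"
  by (induction t) (auto simp: place_def split: prod.split)

lemma sim_step: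
  "(hc A (Suc t) = Suc (hc A t) \<and> sc A (Suc t) = sc A t) \<or>
   (hc A (Suc t) = hc A t \<and> sc A (Suc t) = Suc (sc A t))"
  by (auto simp: hc_def sc_def tot_def place_def split: prod.split)

lemma sim_sum: "hc A t + sc A t = t"
proof (induction t)
  case 0
  then show ?case by (simp add: hc_def sc_def tot_def)
next
  case (Suc t)
  then show ?case using sim_step[of A t] by auto
qed

lemma butlast_rep0: "butlast (replicate (Suc n) z) = replicate n z"
  by (induction n) auto

lemma butlast_rep: "butlast (xs @ replicate (Suc n) z) = xs @ replicate n z"
  by (simp only: butlast_append butlast_rep0) simp

lemma run_sim:
  assumes "\<forall>t'<t. hc A t' < N \<and> sc A t' < M"
  shows "run A [] (replicate N (2/5) @ mid @ replicate M (3/20)) =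
         run A (sim A t) (replicate (N - hc A t) (2/5) @ mid @ replicate (M - sc A t) (3/20))"
  using assms
proof (induction t)
  case 0
  then show ?case by (simp add: hc_def sc_def tot_def)
next
  case (Suc t)
  have IH: "run A [] (replicate N (2/5) @ mid @ replicate M (3/20)) =
         run A (sim A t) (replicate (N - hc A t) (2/5) @ mid @ replicate (M - sc A t) (3/20))"
    using Suc by auto
  have hN: "hc A t < N" and sM: "sc A t < M" using Suc.prems by auto
  obtain p q where pq: "N - hc A t = Suc p" "M - sc A t = Suc q"
    using hN sM by (metis Suc_diff_Suc)
  define L where "L = replicate (N - hc A t) (2/5) @ mid @ replicate (M - sc A t) (3/20::real)"
  have Lne: "L \<noteq> []" and hd: "hd L = 2/5" and lst: "last L = 3/20" and
     tl: "tl L = replicate p (2/5) @ mid @ replicate (M - sc A t) (3/20)"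
    by (auto simp: L_def pq)
  have bl: "butlast L = replicate (N - hc A t) (2/5) @ mid @ replicate q (3/20)"
    unfolding L_def pq(2) using butlast_rep[of "replicate (Suc p) (2/5) @ mid" q "3/20"]
    by (simp only: append_assoc pq(1))
  obtain th j where Aeq: "A (sim A t) (2/5) (3/20) = (th, j)" by fastforce
  have r: "run A (sim A t) L = run A (place (sim A t) j (if th then 2/5 else 3/20))
                (if th then tl L else butlast L)"
    using run_step[OF Lne, of A "sim A t"] unfolding hd lst Aeq by simp
  have simS: "sim A (Suc t) = place (sim A t) j (if th then 2/5 else 3/20)"
    using Aeq by simp
  have IHL: "run A [] (replicate N (2/5) @ mid @ replicate M (3/20)) = run A (sim A t) L"
    unfolding L_def by (rule IH)
  show ?case
  proof (cases th)
    case True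
    have "hc A (Suc t) = Suc (hc A t)" "sc A (Suc t) = sc A t"
      using True simS by (auto simp: hc_def sc_def tot_def place_def)
    then have e1: "N - hc A (Suc t) = p" "M - sc A (Suc t) = M - sc A t" using pq by auto
    have "run A (sim A t) L = run A (sim A (Suc t)) (tl L)" using r True simS by simp
    then show ?thesis unfolding IHL e1 tl .
  next
    case False
    have "hc A (Suc t) = hc A t" "sc A (Suc t) = Suc (sc A t)"
      using False simS by (auto simp: hc_def sc_def tot_def place_def)
    then have e1: "N - hc A (Suc t) = N - hc A t" "M - sc A (Suc t) = q" using pq by auto
    have "run A (sim A t) L = run A (sim A (Suc t)) (butlast L)" using r False simS by simp
    then show ?thesis unfolding IHL e1 bl .
  qed
qed



lemma valid_id: "\<forall>x\<in>set I. x \<le> 1 \<Longrightarrow> valid_packing I id"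
proof -
  assume a: "\<forall>x\<in>set I. x \<le> 1"
  show ?thesis unfolding valid_packing_def
  proof
    fix b
    show "(\<Sum>i | i < length I \<and> id i = b. I ! i) \<le> 1"
    proof (cases "b < length I")
      case True
      then have e: "{i. i < length I \<and> id i = b} = {b}" by auto
      show ?thesis unfolding e using a True by (simp add: nth_mem)
    next
      case False
      then have e: "{i. i < length I \<and> id i = b} = {}" by auto
      show ?thesis unfolding e by simp
    qed
  qed
qed

lemma OPT_ge_sum:
  assumes "\<forall>x\<in>set I. x \<le> 1"
  shows "sum_list I \<le> real (OPT I)"
proof -
  have ex: "\<exists>k f. valid_packing I f \<and> bins_used I f = k"
    using valid_id[OF assms] by blast
  obtain f where f: "valid_packing I f" "bins_used I f = OPT I"
    using LeastI_ex[of "\<lambda>k. \<exists>f. valid_packing I f \<and> bins_used I f = k"] ex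
    unfolding OPT_def by blast
  have "sum_list I = (\<Sum>i<length I. I ! i)"
    by (simp add: sum_list_sum_nth atLeast0LessThan)
  also have "\<dots> = (\<Sum>y\<in>f ` {..<length I}. \<Sum>i\<in>{x \<in> {..<length I}. f x = y}. I ! i)"
    by (rule sum.image_gen) simp
  also have "\<dots> \<le> (\<Sum>y\<in>f ` {..<length I}. 1)"
  proof (rule sum_mono)
    fix y
    have "{x \<in> {..<length I}. f x = y} = {i. i < length I \<and> f i = y}" by auto
    then show "(\<Sum>i\<in>{x \<in> {..<length I}. f x = y}. I ! i) \<le> 1"
      using f(1) unfolding valid_packing_def by simp
  qed
  also have "\<dots> = real (bins_used I f)" by (simp add: bins_used_def)
  finally show ?thesis using f(2) by simp
qed

lemma concat_packing:
  "\<forall>g\<in>set G. sum_list g \<le> 1 \<Longrightarrow>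
   \<exists>f. valid_packing (concat G) f \<and> f ` {..<length (concat G)} \<subseteq> {..<length G}"
proof (induction G)
  case Nil
  then show ?case by (auto simp: valid_packing_def)
next
  case (Cons g G)
  obtain f' where f': "valid_packing (concat G) f'" "f' ` {..<length (concat G)} \<subseteq> {..<length G}"
    using Cons by auto
  define f where "f i = (if i < length g then 0 else Suc (f' (i - length g)))" for i
  have img: "f ` {..<length (concat (g # G))} \<subseteq> {..<length (g # G)}"
  proof
    fix y assume "y \<in> f ` {..<length (concat (g # G))}"
    then obtain i where i: "i < length g + length (concat G)" "y = f i" by auto
    show "y \<in> {..<length (g # G)}"
    proof (cases "i < length g")
      case True then show ?thesis using i by (simp add: f_def)
    next
      case False
      then have "i - length g \<in> {..<length (concat G)}" using i by auto
      then have "f' (i - length g) < length G" using f'(2) by blast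
      then show ?thesis using i False by (simp add: f_def)
    qed
  qed
  have valid: "valid_packing (concat (g # G)) f"
    unfolding valid_packing_def
  proof
    fix b
    show "(\<Sum>i | i < length (concat (g # G)) \<and> f i = b. concat (g # G) ! i) \<le> 1"
    proof (cases b)
      case 0
      have "{i. i < length (concat (g # G)) \<and> f i = b} = {..<length g}"
        using 0 by (auto simp: f_def)
      moreover have "(\<Sum>i<length g. (g @ concat G) ! i) = sum_list g"
        by (simp add: sum_list_sum_nth atLeast0LessThan nth_append)
      ultimately show ?thesis using Cons.prems by simp
    next
      case (Suc b')
      have e: "{i. i < length (concat (g # G)) \<and> f i = b} =
            (\<lambda>k. k + length g) ` {k. k < length (concat G) \<and> f' k = b'}"
      proof
        show "{i. i < length (concat (g # G)) \<and> f i = b}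
              \<subseteq> (\<lambda>k. k + length g) ` {k. k < length (concat G) \<and> f' k = b'}"
        proof
          fix i assume i: "i \<in> {i. i < length (concat (g # G)) \<and> f i = b}"
          then have "\<not> i < length g" using Suc by (auto simp: f_def)
          then have "i = (i - length g) + length g" "i - length g < length (concat G)"
                    "f' (i - length g) = b'"
            using i Suc by (auto simp: f_def)
          then show "i \<in> (\<lambda>k. k + length g) ` {k. k < length (concat G) \<and> f' k = b'}"
            by blast
        qed
      qed (auto simp: f_def Suc)
      have "(\<Sum>i | i < length (concat (g # G)) \<and> f i = b. concat (g # G) ! i)
          = (\<Sum>k | k < length (concat G) \<and> f' k = b'. concat (g # G) ! (k + length g))"
        unfolding e by (subst sum.reindex) (auto simp: inj_on_def)
      also have "\<dots> = (\<Sum>k | k < length (concat G) \<and> f' k = b'. concat G ! k)"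
        by (simp add: nth_append)
      also have "\<dots> \<le> 1" using f'(1) unfolding valid_packing_def by blast
      finally show ?thesis .
    qed
  qed
  show ?case using valid img by blast
qed

lemma perm_packing:
  assumes "mset I = mset I'" "valid_packing I' f"
  shows "\<exists>f2. valid_packing I f2 \<and> f2 ` {..<length I} = f ` {..<length I'}"
proof -
  obtain p where p: "p permutes {..<length I'}" "permute_list p I' = I"
    using mset_eq_permutation[OF assms(1)] by blast
  have len: "length I = length I'" using p(2) by auto
  have nth: "I ! i = I' ! p i" if "i < length I" for i
    using permute_list_nth[OF p(1)] p(2) that len by auto
  have pin: "p i < length I' \<longleftrightarrow> i < length I'" for i
    using permutes_in_image[OF p(1)] by simp
  have valid: "valid_packing I (f \<circ> p)"
    unfolding valid_packing_def
  proof
    fix b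
    have e: "p ` {i. i < length I \<and> (f \<circ> p) i = b} = {k. k < length I' \<and> f k = b}"
    proof
      show "p ` {i. i < length I \<and> (f \<circ> p) i = b} \<subseteq> {k. k < length I' \<and> f k = b}"
      proof
        fix k assume "k \<in> p ` {i. i < length I \<and> (f \<circ> p) i = b}"
        then obtain i where "i < length I" "f (p i) = b" "k = p i" by auto
        then show "k \<in> {k. k < length I' \<and> f k = b}" using pin[of i] len by simp
      qed
      show "{k. k < length I' \<and> f k = b} \<subseteq> p ` {i. i < length I \<and> (f \<circ> p) i = b}"
      proof
        fix k assume k: "k \<in> {k. k < length I' \<and> f k = b}"
        have pk: "p (inv p k) = k" using permutes_inverses(1)[OF p(1)] by simp
        have ik: "inv p k < length I'" using pin[of "inv p k"] pk k by simp
        show "k \<in> p ` {i. i < length I \<and> (f \<circ> p) i = b}"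
        proof (rule image_eqI[where x="inv p k"])
          show "k = p (inv p k)" using pk by simp
          show "inv p k \<in> {i. i < length I \<and> (f \<circ> p) i = b}" using ik len k pk by simp
        qed
      qed
    qed
    have inj: "inj_on p {i. i < length I \<and> (f \<circ> p) i = b}"
      using permutes_inj[OF p(1)] by (auto simp: inj_on_def inj_def)
    have "(\<Sum>i | i < length I \<and> (f \<circ> p) i = b. I ! i)
        = (\<Sum>i | i < length I \<and> (f \<circ> p) i = b. I' ! p i)"
      by (rule sum.cong) (auto simp: nth)
    also have "\<dots> = (\<Sum>k\<in>p ` {i. i < length I \<and> (f \<circ> p) i = b}. I' ! k)"
      by (subst sum.reindex[OF inj]) simp
    also have "\<dots> = (\<Sum>k | k < length I' \<and> f k = b. I' ! k)" unfolding e ..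
    also have "\<dots> \<le> 1" using assms(2) unfolding valid_packing_def by blast
    finally show "(\<Sum>i | i < length I \<and> (f \<circ> p) i = b. I ! i) \<le> 1" .
  qed
  have "(f \<circ> p) ` {..<length I} = f ` (p ` {..<length I'})" using len by (simp add: image_comp)
  also have "p ` {..<length I'} = {..<length I'}" using permutes_image[OF p(1)] .
  finally show ?thesis using valid by blast
qed

lemma OPT_le:
  assumes "mset I = mset (concat G)" "\<forall>g\<in>set G. sum_list g \<le> 1"
  shows "OPT I \<le> length G"
proof -
  obtain f where f: "valid_packing (concat G) f" "f ` {..<length (concat G)} \<subseteq> {..<length G}"
    using concat_packing[OF assms(2)] by blast
  obtain f2 where f2: "valid_packing I f2" "f2 ` {..<length I} = f ` {..<length (concat G)}"
    using perm_packing[OF assms(1) f(1)] by blast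
  have "bins_used I f2 \<le> length G"
    unfolding bins_used_def f2(2) using card_mono[OF _ f(2)] by simp
  moreover have "OPT I \<le> bins_used I f2"
    unfolding OPT_def by (rule Least_le) (use f2(1) in blast)
  ultimately show ?thesis by simp
qed



lemma mset_concat_rep: "mset (concat (replicate n g)) = repeat_mset n (mset g)"
  by (induction n) auto

lemma opt_A1: "OPT (replicate (16*k) (2/5) @ replicate (64*k) (3/20)) \<le> 16*k"
proof -
  let ?G = "replicate (16*k) [2/5, 3/20, 3/20, 3/20, 3/20::real]"
  have "mset (replicate (16*k) (2/5) @ replicate (64*k) (3/20)) = mset (concat ?G)"
    by (simp add: mset_concat_rep multiset_eq_iff)
  moreover have "\<forall>g\<in>set ?G. sum_list g \<le> 1" by (auto simp: set_replicate_conv_if)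
  ultimately show ?thesis using OPT_le by fastforce
qed

lemma opt_A2: "OPT (replicate (16*k) (2/5) @ replicate (15*k) (3/20)) \<le> 9*k"
proof -
  let ?G = "replicate (7*k) [2/5, 2/5, 3/20::real] @ replicate (2*k) [2/5, 3/20, 3/20, 3/20, 3/20::real]"
  have "mset (replicate (16*k) (2/5) @ replicate (15*k) (3/20)) = mset (concat ?G)"
    by (simp add: mset_concat_rep multiset_eq_iff)
  moreover have "\<forall>g\<in>set ?G. sum_list g \<le> 1" by (auto simp: set_replicate_conv_if)
  ultimately show ?thesis using OPT_le by fastforce
qed

lemma opt_Bd: "OPT (replicate (16*k) (2/5) @ replicate (8*k) (7/20) @ replicate (15*k) (3/20)) \<le> 12*k"
proof -
  let ?G = "replicate (8*k) [2/5, 2/5, 3/20::real] @ replicate (3*k) [7/20, 7/20, 3/20, 3/20::real]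
            @ replicate k [7/20, 7/20, 3/20::real]"
  have "mset (replicate (16*k) (2/5) @ replicate (8*k) (7/20) @ replicate (15*k) (3/20)) = mset (concat ?G)"
    by (simp add: mset_concat_rep multiset_eq_iff)
  moreover have "\<forall>g\<in>set ?G. sum_list g \<le> 1" by (auto simp: set_replicate_conv_if)
  ultimately show ?thesis using OPT_le by fastforce
qed

lemma opt_B1: "OPT (replicate (30*k) (2/5) @ replicate (15*k) (3/20)) \<le> 15*k"
proof -
  let ?G = "replicate (15*k) [2/5, 2/5, 3/20::real]"
  have "mset (replicate (30*k) (2/5) @ replicate (15*k) (3/20)) = mset (concat ?G)"
    by (simp add: mset_concat_rep multiset_eq_iff)
  moreover have "\<forall>g\<in>set ?G. sum_list g \<le> 1" by (auto simp: set_replicate_conv_if)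
  ultimately show ?thesis using OPT_le by fastforce
qed



lemma final_hist:
  assumes "run A [] I = run A H0 R" "binv H0" "\<forall>x\<in>set R. x \<le> 1" "\<forall>x\<in>set I. x \<le> 1"
  shows "\<exists>T. run A [] I = H0 @ T" "binv (run A [] I)" "mset (map fst (run A [] I)) = mset I"
  using run_props[OF assms(2) assms(3), of A] run_props[OF inv_Nil assms(4), of A] assms(1)
  by auto

lemma bin_sum:
  assumes "H = H0 @ T" "binv H" "binv H0" "set (map fst H) \<subseteq> {2/5, 3/20, 7/20}"
    "\<And>xa xb xd pa pb. 8*xa+3*xb+7*xd \<le> 20 \<Longrightarrow> pa \<le> xa \<Longrightarrow> pb \<le> xb \<Longrightarrow> F xa xb xd + g pa pb \<le> (c::nat)"
    "g 0 0 = 0"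
  shows "(\<Sum>j<nbins H. F (cnt H (2/5) j) (cnt H (3/20) j) (cnt H (7/20) j))
       + (\<Sum>j<nbins H0. g (cnt H0 (2/5) j) (cnt H0 (3/20) j)) \<le> nbins H * c"
proof -
  have nb: "nbins H0 \<le> nbins H" using assms(1) nbins_mono by simp
  have "(\<Sum>j<nbins H0. g (cnt H0 (2/5) j) (cnt H0 (3/20) j)) = (\<Sum>j<nbins H. g (cnt H0 (2/5) j) (cnt H0 (3/20) j))"
    using sum_prefix[OF assms(3) nb, of g] assms(6) by simp
  moreover have "(\<Sum>j<nbins H. F (cnt H (2/5) j) (cnt H (3/20) j) (cnt H (7/20) j) + g (cnt H0 (2/5) j) (cnt H0 (3/20) j)) \<le> nbins H * c"
  proof (rule sum_le_card)
    fix j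
    show "F (cnt H (2/5) j) (cnt H (3/20) j) (cnt H (7/20) j) + g (cnt H0 (2/5) j) (cnt H0 (3/20) j) \<le> c"
      using assms(5)[OF feas[OF assms(2) assms(4)]] cnt_mono[of H0 _ j T] assms(1) by simp
  qed
  ultimately show ?thesis by (simp add: sum.distrib)
qed

lemma tot_sum: "binv H \<Longrightarrow> (\<Sum>j<nbins H. cnt H x j) = tot H x"
  by (rule sum_cnt) (simp add: binv_def)

lemma items_sub:
  "mset (map fst H) = mset I \<Longrightarrow> set I \<subseteq> S \<Longrightarrow> set (map fst H) \<subseteq> S"
  by (metis set_mset_mset)

lemma tot_I: "mset (map fst H) = mset I \<Longrightarrow> tot H x = count (mset I) x"
  by (simp add: tot_mset)



lemma prefix_facts:
  "binv (sim A t)" "set (map fst (sim A t)) \<subseteq> {2/5, 3/20, 7/20}"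
  using sim_binv apply blast
  by (rule order_trans[OF sim_items]) auto

lemma caseA:
  assumes pre: "\<forall>t'<t. hc A t' < 16*k \<and> sc A t' < 15*k" and h: "hc A t = 16*k" and s: "sc A t < 15*k"
  shows "16 * (16*k) \<le> 15 * ALG A (replicate (16*k) (2/5) @ replicate (64*k) (3/20))
       \<or> 16 * (9*k) \<le> 15 * ALG A (replicate (16*k) (2/5) @ replicate (15*k) (3/20))"
proof -
  define H0 where "H0 = sim A t"
  have b0: "binv H0" and it0: "set (map fst H0) \<subseteq> {2/5, 3/20, 7/20}"
    using prefix_facts unfolding H0_def by auto
  define P0 where "P0 = (\<Sum>j<nbins H0. (if 2 \<le> cnt H0 (2/5) j then 1 else 0::nat))"
  have "16*k = (\<Sum>j<nbins H0. cnt H0 (2/5) j)"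
    using tot_sum[OF b0] h unfolding hc_def H0_def by simp
  also have "\<dots> \<le> (\<Sum>j<nbins H0. 1 + (if 2 \<le> cnt H0 (2/5) j then 1 else 0::nat))"
  proof (rule sum_mono)
    fix j
    have "8 * cnt H0 (2/5) j + 3 * cnt H0 (3/20) j + 7 * cnt H0 (7/20) j \<le> 20"
      using feas[OF b0 it0] .
    then show "cnt H0 (2/5) j \<le> 1 + (if 2 \<le> cnt H0 (2/5) j then 1 else 0)" by auto
  qed
  also have "\<dots> = nbins H0 + P0" unfolding P0_def by (subst sum.distrib) simp
  finally have key: "16*k \<le> nbins H0 + P0" .
  define I1 where "I1 = replicate (16*k) (2/5) @ replicate (64*k) (3/20::real)"
  have r1: "run A [] I1 = run A H0 (replicate (16*k - hc A t) (2/5) @ replicate (64*k - sc A t) (3/20))"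
    using run_sim[of t A "16*k" "64*k" "[]"] pre unfolding I1_def H0_def by force
  have I1le: "\<forall>x\<in>set I1. x \<le> 1" by (auto simp: I1_def set_replicate_conv_if)
  have R1: "\<forall>x\<in>set (replicate (16*k - hc A t) (2/5) @ replicate (64*k - sc A t) (3/20::real)). x \<le> 1"
    by (auto simp: set_replicate_conv_if)
  obtain T1 where T1: "run A [] I1 = H0 @ T1"
    using final_hist(1)[OF r1 b0 R1 I1le] by auto
  have b1: "binv (run A [] I1)" using final_hist(2)[OF r1 b0 R1 I1le] by auto
  have m1: "mset (map fst (run A [] I1)) = mset I1" using final_hist(3)[OF r1 b0 R1 I1le] by auto
  have it1: "set (map fst (run A [] I1)) \<subseteq> {2/5, 3/20, 7/20}"
    by (rule items_sub[OF m1]) (auto simp: I1_def set_replicate_conv_if)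
  note bs1 = bin_sum[OF T1 b1 b0 it1, of "\<lambda>xa xb xd. 2*xa + xb" "\<lambda>pa pb. if 2 \<le> pa then 1 else 0" 6]
  have "(\<Sum>j<nbins (run A [] I1). 2 * cnt (run A [] I1) (2/5) j + cnt (run A [] I1) (3/20) j) + P0
        \<le> nbins (run A [] I1) * 6"
    unfolding P0_def by (rule bs1) auto
  moreover have "(\<Sum>j<nbins (run A [] I1). 2 * cnt (run A [] I1) (2/5) j + cnt (run A [] I1) (3/20) j)
        = 2 * (16*k) + 64*k"
    using tot_sum[OF b1] tot_I[OF m1] by (simp add: sum.distrib sum_distrib_left[symmetric] I1_def)
  ultimately have A1: "96*k + P0 \<le> 6 * ALG A I1" by (simp add: ALG_def)
  define I2 where "I2 = replicate (16*k) (2/5) @ replicate (15*k) (3/20::real)"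
  have r2: "run A [] I2 = run A H0 (replicate (16*k - hc A t) (2/5) @ replicate (15*k - sc A t) (3/20))"
    using run_sim[of t A "16*k" "15*k" "[]"] pre unfolding I2_def H0_def by force
  have I2le: "\<forall>x\<in>set I2. x \<le> 1" by (auto simp: I2_def set_replicate_conv_if)
  have R2: "\<forall>x\<in>set (replicate (16*k - hc A t) (2/5) @ replicate (15*k - sc A t) (3/20::real)). x \<le> 1"
    by (auto simp: set_replicate_conv_if)
  obtain T2 where T2: "run A [] I2 = H0 @ T2"
    using final_hist(1)[OF r2 b0 R2 I2le] by auto
  have A2: "nbins H0 \<le> ALG A I2" using nbins_mono[of H0 T2] T2 by (simp add: ALG_def)
  show ?thesis
  proof (cases "48*k \<le> 5 * nbins H0")
    case True
    then show ?thesis using A2 unfolding I2_def by linarith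
  next
    case False
    then show ?thesis using key A1 unfolding I1_def by linarith
  qed
qed



definition l2 :: "nat \<Rightarrow> nat \<Rightarrow> nat" where
  "l2 x y = (if 5 \<le> y then 2 else if 3 \<le> y \<or> (1 \<le> x \<and> 2 \<le> y) then 1 else 0)"
definition l3 :: "nat \<Rightarrow> nat \<Rightarrow> nat" where
  "l3 x y = (if 5 \<le> y then 2 else if 2 \<le> y then 1 else 0)"

lemma l2_bin: "8*xa+3*xb+7*xd \<le> (20::nat) \<Longrightarrow> pa \<le> xa \<Longrightarrow> pb \<le> xb \<Longrightarrow> xa + xd + l2 pa pb \<le> 2"
  unfolding l2_def by (simp split: if_split)

lemma l3_bin: "8*xa+3*xb+7*xd \<le> (20::nat) \<Longrightarrow> pa \<le> xa \<Longrightarrow> pb \<le> xb \<Longrightarrow> xa + l3 pa pb \<le> 2"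
  unfolding l3_def by (simp split: if_split)

lemma pre_bin: "8*pa+3*pb+7*pd \<le> (20::nat) \<Longrightarrow> 48 * pb \<le> 49 + 96 * l2 pa pb + 48 * l3 pa pb"
  unfolding l2_def l3_def by (simp split: if_split)

lemma caseB:
  assumes pre: "\<forall>t'<t. hc A t' < 16*k \<and> sc A t' < 15*k" and h: "hc A t < 16*k" and s: "sc A t = 15*k"
  shows "16 * (9*k) \<le> 15 * ALG A (replicate (16*k) (2/5) @ replicate (15*k) (3/20))
       \<or> 16 * (12*k) \<le> 15 * ALG A (replicate (16*k) (2/5) @ replicate (8*k) (7/20) @ replicate (15*k) (3/20))
       \<or> 16 * (15*k) \<le> 15 * ALG A (replicate (30*k) (2/5) @ replicate (15*k) (3/20))"
proof -
  define H0 where "H0 = sim A t"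
  have b0: "binv H0" and it0: "set (map fst H0) \<subseteq> {2/5, 3/20, 7/20}"
    using prefix_facts unfolding H0_def by auto
  define L2 where "L2 = (\<Sum>j<nbins H0. l2 (cnt H0 (2/5) j) (cnt H0 (3/20) j))"
  define L3 where "L3 = (\<Sum>j<nbins H0. l3 (cnt H0 (2/5) j) (cnt H0 (3/20) j))"
  have "48*(15*k) = (\<Sum>j<nbins H0. 48 * cnt H0 (3/20) j)"
    using tot_sum[OF b0] s unfolding sc_def H0_def by (simp add: sum_distrib_left[symmetric])
  also have "\<dots> \<le> (\<Sum>j<nbins H0. 49 + 96 * l2 (cnt H0 (2/5) j) (cnt H0 (3/20) j) + 48 * l3 (cnt H0 (2/5) j) (cnt H0 (3/20) j))"
    by (rule sum_mono) (rule pre_bin[OF feas[OF b0 it0]])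
  also have "\<dots> = 49 * nbins H0 + 96 * L2 + 48 * L3"
    unfolding L2_def L3_def by (simp add: sum.distrib sum_distrib_left)
  finally have key: "48*(15*k) \<le> 49 * nbins H0 + 96 * L2 + 48 * L3" .
  define I2 where "I2 = replicate (16*k) (2/5) @ replicate (15*k) (3/20::real)"
  have r2: "run A [] I2 = run A H0 (replicate (16*k - hc A t) (2/5) @ replicate (15*k - sc A t) (3/20))"
    using run_sim[of t A "16*k" "15*k" "[]"] pre unfolding I2_def H0_def by force
  have I2le: "\<forall>x\<in>set I2. x \<le> 1" by (auto simp: I2_def set_replicate_conv_if)
  have R2: "\<forall>x\<in>set (replicate (16*k - hc A t) (2/5) @ replicate (15*k - sc A t) (3/20::real)). x \<le> 1"
    by (auto simp: set_replicate_conv_if)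
  obtain T2 where T2: "run A [] I2 = H0 @ T2"
    using final_hist(1)[OF r2 b0 R2 I2le] by auto
  have A2: "nbins H0 \<le> ALG A I2" using nbins_mono[of H0 T2] T2 by (simp add: ALG_def)
  define I4 where "I4 = replicate (16*k) (2/5) @ replicate (8*k) (7/20) @ replicate (15*k) (3/20::real)"
  have r4: "run A [] I4 = run A H0 (replicate (16*k - hc A t) (2/5) @ replicate (8*k) (7/20) @ replicate (15*k - sc A t) (3/20))"
    using run_sim[of t A "16*k" "15*k" "replicate (8*k) (7/20)"] pre unfolding I4_def H0_def by force
  have I4le: "\<forall>x\<in>set I4. x \<le> 1" by (auto simp: I4_def set_replicate_conv_if)
  have R4: "\<forall>x\<in>set (replicate (16*k - hc A t) (2/5) @ replicate (8*k) (7/20) @ replicate (15*k - sc A t) (3/20::real)). x \<le> 1"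
    by (auto simp: set_replicate_conv_if)
  obtain T4 where T4: "run A [] I4 = H0 @ T4"
    using final_hist(1)[OF r4 b0 R4 I4le] by auto
  have b4: "binv (run A [] I4)" using final_hist(2)[OF r4 b0 R4 I4le] by auto
  have m4: "mset (map fst (run A [] I4)) = mset I4" using final_hist(3)[OF r4 b0 R4 I4le] by auto
  have it4: "set (map fst (run A [] I4)) \<subseteq> {2/5, 3/20, 7/20}"
    by (rule items_sub[OF m4]) (auto simp: I4_def set_replicate_conv_if)
  note bs4 = bin_sum[OF T4 b4 b0 it4, of "\<lambda>xa xb xd. xa + xd" l2 2]
  have "(\<Sum>j<nbins (run A [] I4). cnt (run A [] I4) (2/5) j + cnt (run A [] I4) (7/20) j) + L2
        \<le> nbins (run A [] I4) * 2"
    unfolding L2_def by (rule bs4) (auto simp: l2_bin l2_def)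
  moreover have "(\<Sum>j<nbins (run A [] I4). cnt (run A [] I4) (2/5) j + cnt (run A [] I4) (7/20) j)
        = 16*k + 8*k"
    using tot_sum[OF b4] tot_I[OF m4] by (simp add: sum.distrib I4_def)
  ultimately have A4: "24*k + L2 \<le> 2 * ALG A I4" by (simp add: ALG_def)
  define I5 where "I5 = replicate (30*k) (2/5) @ replicate (15*k) (3/20::real)"
  have pre5: "\<forall>t'<t. hc A t' < 30*k \<and> sc A t' < 15*k" using pre by fastforce
  have r5: "run A [] I5 = run A H0 (replicate (30*k - hc A t) (2/5) @ replicate (15*k - sc A t) (3/20))"
    using run_sim[of t A "30*k" "15*k" "[]"] pre5 unfolding I5_def H0_def by force
  have I5le: "\<forall>x\<in>set I5. x \<le> 1" by (auto simp: I5_def set_replicate_conv_if)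
  have R5: "\<forall>x\<in>set (replicate (30*k - hc A t) (2/5) @ replicate (15*k - sc A t) (3/20::real)). x \<le> 1"
    by (auto simp: set_replicate_conv_if)
  obtain T5 where T5: "run A [] I5 = H0 @ T5"
    using final_hist(1)[OF r5 b0 R5 I5le] by auto
  have b5: "binv (run A [] I5)" using final_hist(2)[OF r5 b0 R5 I5le] by auto
  have m5: "mset (map fst (run A [] I5)) = mset I5" using final_hist(3)[OF r5 b0 R5 I5le] by auto
  have it5: "set (map fst (run A [] I5)) \<subseteq> {2/5, 3/20, 7/20}"
    by (rule items_sub[OF m5]) (auto simp: I5_def set_replicate_conv_if)
  note bs5 = bin_sum[OF T5 b5 b0 it5, of "\<lambda>xa xb xd. xa" l3 2]
  have "(\<Sum>j<nbins (run A [] I5). cnt (run A [] I5) (2/5) j) + L3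
        \<le> nbins (run A [] I5) * 2"
    unfolding L3_def by (rule bs5) (auto simp: l3_bin l3_def)
  moreover have "(\<Sum>j<nbins (run A [] I5). cnt (run A [] I5) (2/5) j) = 30*k"
    using tot_sum[OF b5] tot_I[OF m5] by (simp add: I5_def)
  ultimately have A5: "30*k + L3 \<le> 2 * ALG A I5" by (simp add: ALG_def)
  show ?thesis
  proof (cases "48*k \<le> 5 * nbins H0")
    case True
    then show ?thesis using A2 unfolding I2_def by linarith
  next
    case F1: False
    show ?thesis
    proof (cases "8*k \<le> 5 * L2")
      case True
      then show ?thesis using A4 unfolding I4_def by linarith
    next
      case False
      then show ?thesis using F1 key A5 unfolding I5_def by linarith
    qed
  qed
qed



lemma sorted_rep: "sorted_wrt (\<ge>) (replicate n (x::real))"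
  by (induction n) auto

lemma good:
  assumes I: "I = replicate N (2/5) @ replicate K (7/20) @ replicate M (3/20::real)"
    and N: "16*m \<le> N" and m: "m \<ge> 1" and U: "OPT I \<le> U" and R: "16*U \<le> 15*ALG A I"
  shows "(\<forall>x\<in>set I. 0 < x \<and> x \<le> 1) \<and> sorted_wrt (\<ge>) I \<and> OPT I > m
         \<and> real (ALG A I) > 16/15 * (real (OPT I) - 1)"
proof -
  have items: "\<forall>x\<in>set I. 0 < x \<and> x \<le> 1" by (auto simp: I set_replicate_conv_if)
  have sorted: "sorted_wrt (\<ge>) I"
    by (auto simp: I sorted_wrt_append sorted_rep set_replicate_conv_if)
  have "sum_list I = real N * (2/5) + real K * (7/20) + real M * (3/20)"
    by (simp add: I sum_list_replicate)
  also have "\<dots> \<ge> real N * (2/5)" by simp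
  finally have "real N * (2/5) \<le> real (OPT I)" using OPT_ge_sum[of I] items by fastforce
  moreover have "real N \<ge> 16 * real m" using N by linarith
  ultimately have "real m < real (OPT I)" using m by linarith
  then have opt: "OPT I > m" by simp
  have "16 * OPT I \<le> 15 * ALG A I" using U R by linarith
  then have "real (16 * OPT I) \<le> real (15 * ALG A I)" by (simp only: of_nat_le_iff)
  then have "16 * real (OPT I) \<le> 15 * real (ALG A I)" by simp
  moreover have "16/15 * (real (OPT I) - 1) = (16 * real (OPT I)) / 15 - 16/15"
    by (simp add: field_simps)
  ultimately have "real (ALG A I) > 16/15 * (real (OPT I) - 1)" by linarith
  with items sorted opt show ?thesis by blast
qed

theorem theorem4:
  fixes A :: maxmin_alg and m :: nat
  assumes "m \<ge> 1"
  shows "\<exists>I :: real list. (\<forall>x\<in>set I. 0 < x \<and> x \<le> 1) \<and> sorted_wrt (\<ge>) I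
           \<and> OPT I > m \<and> real (ALG A I) > 16/15 * (real (OPT I) - 1)"
proof -
  define k where "k = m"
  have k: "k \<ge> 1" using assms k_def by simp
  define P where "P t \<longleftrightarrow> 16*k \<le> hc A t \<or> 15*k \<le> sc A t" for t
  have "P (31*k)" using sim_sum[of A "31*k"] unfolding P_def by linarith
  then have Pt: "P (LEAST t. P t)" by (rule LeastI)
  define t where "t = (LEAST t. P t)"
  have Pt': "P t" using Pt t_def by simp
  have pre: "\<forall>t'<t. hc A t' < 16*k \<and> sc A t' < 15*k"
  proof (intro allI impI)
    fix t' assume "t' < t"
    then have "\<not> P t'" using not_less_Least[of t' P] unfolding t_def by blast
    then show "hc A t' < 16*k \<and> sc A t' < 15*k" unfolding P_def by linarith
  qed
  have "\<not> P 0" using k unfolding P_def by (simp add: hc_def sc_def tot_def)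
  then have "t \<noteq> 0" using Pt' by metis
  then obtain t0 where t0: "t = Suc t0" using not0_implies_Suc by blast
  have h0: "hc A t0 < 16*k" and s0: "sc A t0 < 15*k" using pre t0 by auto
  have caseAB: "(hc A t = 16*k \<and> sc A t < 15*k) \<or> (hc A t < 16*k \<and> sc A t = 15*k)"
  proof -
    have "P (Suc t0)" using Pt' t0 by simp
    then have "16*k \<le> hc A (Suc t0) \<or> 15*k \<le> sc A (Suc t0)" unfolding P_def .
    then show ?thesis using sim_step[of A t0] h0 s0 unfolding t0 by linarith
  qed
  show ?thesis
  proof (cases "hc A t = 16*k \<and> sc A t < 15*k")
    case True
    then have c: "16 * (16*k) \<le> 15 * ALG A (replicate (16*k) (2/5) @ replicate (64*k) (3/20))
       \<or> 16 * (9*k) \<le> 15 * ALG A (replicate (16*k) (2/5) @ replicate (15*k) (3/20))"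
      using caseA[OF pre] by blast
    then show ?thesis
    proof
      assume a: "16 * (16*k) \<le> 15 * ALG A (replicate (16*k) (2/5) @ replicate (64*k) (3/20))"
      have "replicate (16*k) (2/5) @ replicate (64*k) (3/20) = replicate (16*k) (2/5) @ replicate 0 (7/20) @ replicate (64*k) (3/20::real)"
        by simp
      from good[OF this _ assms opt_A1 a] show ?thesis unfolding k_def by blast
    next
      assume a: "16 * (9*k) \<le> 15 * ALG A (replicate (16*k) (2/5) @ replicate (15*k) (3/20))"
      have "replicate (16*k) (2/5) @ replicate (15*k) (3/20) = replicate (16*k) (2/5) @ replicate 0 (7/20) @ replicate (15*k) (3/20::real)"
        by simp
      from good[OF this _ assms opt_A2 a] show ?thesis unfolding k_def by blast
    qed
  next
    case False
    then have hs: "hc A t < 16*k" "sc A t = 15*k" using caseAB by auto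
    note c = caseB[OF pre hs]
    show ?thesis using c
    proof (elim disjE)
      assume a: "16 * (9*k) \<le> 15 * ALG A (replicate (16*k) (2/5) @ replicate (15*k) (3/20))"
      have "replicate (16*k) (2/5) @ replicate (15*k) (3/20) = replicate (16*k) (2/5) @ replicate 0 (7/20) @ replicate (15*k) (3/20::real)"
        by simp
      from good[OF this _ assms opt_A2 a] show ?thesis unfolding k_def by blast
    next
      assume a: "16 * (12*k) \<le> 15 * ALG A (replicate (16*k) (2/5) @ replicate (8*k) (7/20) @ replicate (15*k) (3/20))"
      from good[OF refl _ assms opt_Bd a] show ?thesis unfolding k_def by blast
    next
      assume a: "16 * (15*k) \<le> 15 * ALG A (replicate (30*k) (2/5) @ replicate (15*k) (3/20))"
      have eq: "replicate (30*k) (2/5) @ replicate (15*k) (3/20) = replicate (30*k) (2/5) @ replicate 0 (7/20) @ replicate (15*k) (3/20::real)"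
        by simp
      have le: "16*m \<le> 30*k" unfolding k_def by simp
      from good[OF eq le assms opt_B1 a] show ?thesis by blast
    qed
  qed
qed

end
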